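(* In the spectrum pricing game described in the context, let $(\psi_1,\ldots,\psi_n)$ be any symmetric Nash equilibrium, and let $L_i$ and $U_i$ be the lower and upper endpoints of the support of $\psi_i$. Then for all $i,j\in\{1,\ldots,n\}$ with $j<i$, we have $U_i\le L_j$.
   Context: Spectrum pricing game. There are $l\ge 2$ primaries and $m$ secondaries, $1\le m<l$; there are $n$ channel states $1,\ldots,n$, plus state $0$ meaning "unavailable". Each primary owns one channel, which independently of the others is in state $i\in\{1,\ldots,n\}$ with probability $q_i>0$ and in state $0$ with probability $1-q$, where $q=\sum_{i=1}^n q_i\in(0,1)$. For each state $i\ge1$ there is a penalty function $g_i$, continuous and strictly increasing in the price, with inverse $f_i$, also continuous and strictly increasing. Quoting price $p$ for a channel in state $i$ means the channel offers penalty $g_i(p)$; equivalently, choosing penalty $x$ in state $i$ means charging price $f_i(x)$. Higher states are better: $g_i(p)>g_j(p)$ for all $p$ and $f_i(x)<f_j(x)$ for all $x$ whenever $i<j$. There is a transition cost $c>0$ and a maximum acceptable penalty $v$ with $g_1(c)<v$. We assume that all points used below lie in the common domain of the $f_i$, and that for all $j<k$ and all $x>y>g_j(c)$, $$\frac{f_j(y)-c}{f_k(y)-c}<\frac{f_j(x)-c}{f_k(x)-c}. \qquad (\ast)$$ Each primary knows only its own channel state. A primary whose channel is in state $j\ge1$ draws its penalty from a distribution function $\psi_j$, independently of everything else. A primary in state $0$ offers penalty $v+1$, which is equivalent to not offering its channel. If $Y$ channels are offered with penalty at most $v$, the $\min(Y,m)$ channels with the lowest penalties are sold, with ties broken uniformly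 at random. A primary selling at price $p$ earns $p-c$; otherwise it earns $0$. Strategies and equilibrium. A symmetric strategy profile is one in which every primary uses the same $(\psi_1,\ldots,\psi_n)$. Given such a profile, let $r(x)$ be the probability that a given primary's channel offered at penalty $x$ is sold, and set $\phi_j(x)=(f_j(x)-c)\,r(x)$, the expected profit of choosing penalty $x$ in state $j$. A symmetric Nash equilibrium (NE) is a symmetric profile in which no primary, in any state $j$, can increase its expected profit by unilaterally replacing $\psi_j$ with any other distribution. A penalty $x$ is a best response in state $j$ if $\phi_j(x)=\sup_{y\in\mathbb{R}}\phi_j(y)=:u_{j,\max}$. For a distribution function $\psi_i$, write $L_i=\inf\{x:\psi_i(x)>0\}$ and $U_i=\inf\{x:\psi_i(x)=1\}$. *)

theory Defs
  imports "HOL-Probability.Probability"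
begin

(* States are 1..n; q i = probability that a channel is in state i;
   state 0 (probability 1 - sum q) means "unavailable", penalty v+1.
   M j = the probability measure (on the Borel sets of R) of the penalty
   drawn by a primary in state j; its distribution function is psi. *)

definition psi :: "(nat \<Rightarrow> real measure) \<Rightarrow> nat \<Rightarrow> real \<Rightarrow> real" where
  "psi M i x = measure (M i) {..x}"

definition lowerL :: "(nat \<Rightarrow> real measure) \<Rightarrow> nat \<Rightarrow> ereal" where
  "lowerL M i = Inf {ereal x | x. psi M i x > 0}"

definition upperU :: "(nat \<Rightarrow> real measure) \<Rightarrow> nat \<Rightarrow> ereal" where
  "upperU M i = Inf {ereal x | x. psi M i x = 1}"

(* probability that one given other primary offers penalty strictly below x *)
definition other_below ::
  "nat \<Rightarrow> (nat \<Rightarrow> real) \<Rightarrow> real \<Rightarrow> (nat \<Rightarrow> real measure) \<Rightarrow> real \<Rightarrow> real" where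
  "other_below n q v M x =
     (1 - (\<Sum>i=1..n. q i)) * (if v + 1 < x then 1 else 0)
     + (\<Sum>k=1..n. q k * measure (M k) {..<x})"

definition other_at ::
  "nat \<Rightarrow> (nat \<Rightarrow> real) \<Rightarrow> real \<Rightarrow> (nat \<Rightarrow> real measure) \<Rightarrow> real \<Rightarrow> real" where
  "other_at n q v M x =
     (1 - (\<Sum>i=1..n. q i)) * (if v + 1 = x then 1 else 0)
     + (\<Sum>k=1..n. q k * measure (M k) {x})"

(* r(x): probability that a channel offered at penalty x is sold, when the
   other l-1 primaries play the symmetric profile M.  i = number of others
   strictly below x, k = number of others tied at x (multinomial law);
   ties broken uniformly at random among the k+1 tied channels. *)
definition sale_prob ::
  "nat \<Rightarrow> nat \<Rightarrow> nat \<Rightarrow> (nat \<Rightarrow> real) \<Rightarrow> real \<Rightarrow> (nat \<Rightarrow> real measure) \<Rightarrow> real \<Rightarrow> real" where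
  "sale_prob l m n q v M x =
     (if x \<le> v then
        (let a = other_below n q v M x; b = other_at n q v M x in
          \<Sum>i\<in>{0..l-1}. \<Sum>k\<in>{0..l-1-i}.
             real ((l-1) choose i) * real ((l-1-i) choose k)
             * a ^ i * b ^ k * (1 - a - b) ^ (l-1-i-k)
             * (if i < m then min 1 (real (m - i) / real (k + 1)) else 0))
      else 0)"

definition profit ::
  "nat \<Rightarrow> nat \<Rightarrow> nat \<Rightarrow> (nat \<Rightarrow> real) \<Rightarrow> real \<Rightarrow> real \<Rightarrow> (nat \<Rightarrow> real \<Rightarrow> real)
   \<Rightarrow> (nat \<Rightarrow> real measure) \<Rightarrow> nat \<Rightarrow> real \<Rightarrow> real" where
  "profit l m n q v c f M j x = (f j x - c) * sale_prob l m n q v M x"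

definition is_symNE ::
  "nat \<Rightarrow> nat \<Rightarrow> nat \<Rightarrow> (nat \<Rightarrow> real) \<Rightarrow> real \<Rightarrow> real \<Rightarrow> (nat \<Rightarrow> real \<Rightarrow> real)
   \<Rightarrow> (nat \<Rightarrow> real measure) \<Rightarrow> bool" where
  "is_symNE l m n q v c f M \<longleftrightarrow>
     (\<forall>j\<in>{1..n}. prob_space (M j) \<and> sets (M j) = sets borel \<and>
        integrable (M j) (profit l m n q v c f M j) \<and>
        (\<forall>N. prob_space N \<and> sets N = sets borel \<and> integrable N (profit l m n q v c f M j)
             \<longrightarrow> integral\<^sup>L N (profit l m n q v c f M j)
                 \<le> integral\<^sup>L (M j) (profit l m n q v c f M j)))"

end

theory Submission imports Defs begin

lemma meas_split:
  assumes "prob_space N" "sets N = sets borel"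
  shows "measure N {..<x} + measure N {x::real} \<le> 1"
proof -
  interpret prob_space N by fact
  have "measure N {..<x} + measure N {x} = measure N ({..<x} \<union> {x})"
    by (subst finite_measure_Union) (auto simp: assms(2))
  also have "\<dots> \<le> 1" by simp
  finally show ?thesis .
qed

lemma sale_prob_pos:
  assumes m: "1 \<le> m" and qpos: "\<forall>i\<in>{1..n}. q i > 0" and qs: "(\<Sum>i=1..n. q i) < 1"
    and P: "\<forall>k\<in>{1..n}. prob_space (M k) \<and> sets (M k) = sets borel"
    and x: "x \<le> v"
  shows "sale_prob l m n q v M x > 0"
proof -
  define a where "a = other_below n q v M x"
  define b where "b = other_at n q v M x"
  have a: "a = (\<Sum>k=1..n. q k * measure (M k) {..<x})" using x by (simp add: a_def other_below_def)
  have b: "b = (\<Sum>k=1..n. q k * measure (M k) {x})" using x by (simp add: b_def other_at_def)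
  have a0: "a \<ge> 0" unfolding a using qpos by (intro sum_nonneg mult_nonneg_nonneg) (auto intro: less_imp_le)
  have b0: "b \<ge> 0" unfolding b using qpos by (intro sum_nonneg mult_nonneg_nonneg) (auto intro: less_imp_le)
  have "a + b = (\<Sum>k=1..n. q k * (measure (M k) {..<x} + measure (M k) {x}))"
    unfolding a b by (simp add: sum.distrib[symmetric] algebra_simps)
  also have "\<dots> \<le> (\<Sum>k=1..n. q k)"
    apply (intro sum_mono)
    using qpos P meas_split by (metis mult_left_le less_imp_le)
  finally have ab: "a + b < 1" using qs by linarith
  define T where "T = (\<lambda>i k. real ((l-1) choose i) * real ((l-1-i) choose k)
             * a ^ i * b ^ k * (1 - a - b) ^ (l-1-i-k)
             * (if i < m then min 1 (real (m - i) / real (k + 1)) else 0))"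
  have Tnn: "T i k \<ge> 0" for i k unfolding T_def using a0 b0 ab by auto
  have T00: "T 0 0 > 0" unfolding T_def using m ab by auto
  have "T 0 0 \<le> (\<Sum>k\<in>{0..l-1-0}. T 0 k)"
    by (rule member_le_sum) (auto intro: Tnn)
  also have "\<dots> \<le> (\<Sum>i\<in>{0..l-1}. \<Sum>k\<in>{0..l-1-i}. T i k)"
    by (rule member_le_sum[where f="\<lambda>i. \<Sum>k\<in>{0..l-1-i}. T i k"]) (auto intro: sum_nonneg Tnn)
  finally have "(\<Sum>i\<in>{0..l-1}. \<Sum>k\<in>{0..l-1-i}. T i k) > 0" using T00 by linarith
  then show ?thesis using x unfolding sale_prob_def Let_def a_def[symmetric] b_def[symmetric] T_def
    by simp
qed

lemma br_lemma:
  fixes \<phi> :: "real \<Rightarrow> real"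
  assumes N: "prob_space N" "sets N = sets borel" "integrable N \<phi>"
    and opt: "\<forall>N'. prob_space N' \<and> sets N' = sets borel \<and> integrable N' \<phi>
             \<longrightarrow> integral\<^sup>L N' \<phi> \<le> integral\<^sup>L N \<phi>"
  shows "\<forall>x. \<phi> x \<le> integral\<^sup>L N \<phi>" "AE x in N. \<phi> x = integral\<^sup>L N \<phi>"
proof -
  have meas: "\<phi> \<in> borel_measurable borel"
    using borel_measurable_integrable[OF N(3)] measurable_cong_sets[OF N(2) refl] by blast
  show le: "\<forall>x. \<phi> x \<le> integral\<^sup>L N \<phi>"
  proof
    fix x :: real
    have ps: "prob_space (return borel x)" by (rule prob_space_return) simp
    have int: "integrable (return borel x) \<phi>"
    proof (rule integrableI_bounded)
      show "\<phi> \<in> borel_measurable (return borel x)" using meas by simp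
      have "(\<integral>\<^sup>+ a. ennreal (norm (\<phi> a)) \<partial>return borel x) = ennreal (norm (\<phi> x))"
        by (rule nn_integral_return) (use meas in auto)
      then show "(\<integral>\<^sup>+ a. ennreal (norm (\<phi> a)) \<partial>return borel x) < \<infinity>" by simp
    qed
    have "integral\<^sup>L (return borel x) \<phi> = \<phi> x" by (rule integral_return) (use meas in auto)
    then show "\<phi> x \<le> integral\<^sup>L N \<phi>" using opt ps int by force
  qed
  interpret prob_space N by fact
  define u where "u = integral\<^sup>L N \<phi>"
  have i2: "integrable N (\<lambda>x. u - \<phi> x)" using N(3) by simp
  have "integral\<^sup>L N (\<lambda>x. u - \<phi> x) = u - u"
    using N(3) by (simp add: u_def prob_space)
  then have "AE x in N. u - \<phi> x = 0"
    using integral_nonneg_eq_0_iff_AE[OF i2] le u_def by simp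
  then show "AE x in N. \<phi> x = integral\<^sup>L N \<phi>" unfolding u_def by (auto elim: AE_mp)
qed

lemma ae_point:
  assumes "prob_space N" "sets N = sets borel" "AE x in N. P x" "S \<in> sets borel"
    "measure N S > 0"
  shows "\<exists>x\<in>S. P x"
proof (rule ccontr)
  assume "\<not> ?thesis"
  then have "AE x in N. x \<notin> S" using assms(3) by (auto elim: AE_mp)
  then have "emeasure N S = 0"
    using AE_iff_measurable[of S N "\<lambda>x. x \<notin> S"] assms(2,4) sets_eq_imp_space_eq[OF assms(2)]
    by auto
  then show False using assms(5) by (simp add: measure_def)
qed

lemma arith_contra:
  fixes A B C D rx ry :: real
  assumes "A > 0" "B > 0" "C > 0" "D > 0" "rx > 0" "ry > 0"
    "A * rx \<ge> B * ry" "C * ry \<ge> D * rx" "C / B < D / A"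
  shows False
proof -
  have "C * (B * ry) \<le> C * (A * rx)" using assms by (intro mult_left_mono) auto
  moreover have "B * (D * rx) \<le> B * (C * ry)" using assms by (intro mult_left_mono) auto
  ultimately have "(B * D) * rx \<le> (C * A) * rx" by (simp add: algebra_simps)
  then have "B * D \<le> C * A" using assms(5) by simp
  moreover have "C * A < D * B" using assms by (simp add: field_simps)
  ultimately show False by (simp add: algebra_simps)
qed

theorem theorem2:
  fixes l m n :: nat and q :: "nat \<Rightarrow> real" and f g :: "nat \<Rightarrow> real \<Rightarrow> real"
    and c v :: real and M :: "nat \<Rightarrow> real measure"
  assumes "l \<ge> 2" and "1 \<le> m" and "m < l"
    and "\<forall>i\<in>{1..n}. q i > 0"
    and "0 < (\<Sum>i=1..n. q i)" and "(\<Sum>i=1..n. q i) < 1"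
    and "\<forall>i\<in>{1..n}. continuous_on UNIV (g i) \<and> strict_mono (g i)
                      \<and> continuous_on UNIV (f i) \<and> strict_mono (f i)"
    and "\<forall>i\<in>{1..n}. (\<forall>p. f i (g i p) = p) \<and> (\<forall>x. g i (f i x) = x)"
    and "\<forall>i\<in>{1..n}. \<forall>j\<in>{1..n}. i < j \<longrightarrow>
            (\<forall>p. g i p > g j p) \<and> (\<forall>x. f i x < f j x)"
    and "c > 0" and "g 1 c < v"
    and "\<forall>j\<in>{1..n}. \<forall>k\<in>{1..n}. j < k \<longrightarrow>
            (\<forall>x y. x > y \<and> y > g j c \<longrightarrow>
               (f j y - c) / (f k y - c) < (f j x - c) / (f k x - c))"
    and "is_symNE l m n q v c f M"
  shows "\<forall>i\<in>{1..n}. \<forall>j\<in>{1..n}. j < i \<longrightarrow> upperU M i \<le> lowerL M j"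
proof (intro ballI impI)
  fix i j assume i: "i \<in> {1..n}" and j: "j \<in> {1..n}" and ji: "j < i"
  note NE = assms(13)[unfolded is_symNE_def]
  have P: "\<forall>k\<in>{1..n}. prob_space (M k) \<and> sets (M k) = sets borel" using NE by blast
  define r where "r = sale_prob l m n q v M"
  have rpos: "r x > 0" if "x \<le> v" for x
    unfolding r_def by (rule sale_prob_pos[OF assms(2,4,6) P that])
  have r0: "r x = 0" if "\<not> x \<le> v" for x using that unfolding r_def sale_prob_def by simp
  have key: "(\<forall>x. profit l m n q v c f M k x \<le> integral\<^sup>L (M k) (profit l m n q v c f M k))
     \<and> (AE x in M k. profit l m n q v c f M k x = integral\<^sup>L (M k) (profit l m n q v c f M k))
     \<and> integral\<^sup>L (M k) (profit l m n q v c f M k) > 0" if k: "k \<in> {1..n}" for k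
  proof -
    have h: "prob_space (M k)" "sets (M k) = sets borel" "integrable (M k) (profit l m n q v c f M k)"
      "\<forall>N'. prob_space N' \<and> sets N' = sets borel \<and> integrable N' (profit l m n q v c f M k)
             \<longrightarrow> integral\<^sup>L N' (profit l m n q v c f M k) \<le> integral\<^sup>L (M k) (profit l m n q v c f M k)"
      using NE k by blast+
    note b = br_lemma[OF h]
    have "g k c \<le> g 1 c"
    proof (cases "k = 1")
      case False
      then have "1 < k" "1 \<in> {1..n}" using k by auto
      then show ?thesis using assms(9) k by (meson less_imp_le)
    qed simp
    then have "g k c < v" using assms(11) by simp
    then have "f k (g k c) < f k v" using assms(7) k by (meson strict_monoD)
    then have "f k v > c" using assms(8) k by simp
    then have "profit l m n q v c f M k v > 0"
      unfolding profit_def using rpos[of v] r_def by simp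
    moreover have "profit l m n q v c f M k v \<le> integral\<^sup>L (M k) (profit l m n q v c f M k)"
      using b(1) by blast
    ultimately have "integral\<^sup>L (M k) (profit l m n q v c f M k) > 0" by linarith
    then show ?thesis using b(2) b(1) by blast
  qed
  show "upperU M i \<le> lowerL M j"
  proof (rule ccontr)
    assume "\<not> ?thesis"
    then have "lowerL M j < upperU M i" by simp
    then obtain x0 where x0: "psi M j x0 > 0" "ereal x0 < upperU M i"
      unfolding lowerL_def by (auto simp: Inf_less_iff)
    have "psi M i x0 \<noteq> 1"
    proof
      assume "psi M i x0 = 1"
      then have "upperU M i \<le> ereal x0" unfolding upperU_def by (auto intro: Inf_lower)
      then show False using x0(2) by simp
    qed
    interpret Pi: prob_space "M i" using P i by blast
    have spi: "space (M i) = UNIV" using P i sets_eq_imp_space_eq[of "M i" borel] by auto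
    have si: "sets (M i) = sets borel" using P i by blast
    have "measure (M i) (space (M i) - {..x0}) = 1 - measure (M i) {..x0}"
      by (rule Pi.prob_compl) (simp add: si)
    moreover have "space (M i) - {..x0} = {x0<..}" using spi by auto
    moreover have "measure (M i) {..x0} < 1"
      using Pi.prob_le_1[of "{..x0}"] \<open>psi M i x0 \<noteq> 1\<close> unfolding psi_def by linarith
    ultimately have mi: "measure (M i) {x0<..} > 0" by simp
    obtain x where x: "x \<in> {x0<..}" and
      xe: "profit l m n q v c f M i x = integral\<^sup>L (M i) (profit l m n q v c f M i)"
      using ae_point[OF Pi.prob_space_axioms si key[OF i, THEN conjunct2, THEN conjunct1] _ mi] by auto
    have mj: "measure (M j) {..x0} > 0" using x0(1) unfolding psi_def by simp
    have Pj: "prob_space (M j)" "sets (M j) = sets borel" using P j by blast+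
    obtain y where y: "y \<in> {..x0}" and
      ye: "profit l m n q v c f M j y = integral\<^sup>L (M j) (profit l m n q v c f M j)"
      using ae_point[OF Pj key[OF j, THEN conjunct2, THEN conjunct1] _ mj] by auto
    have xy: "y < x" using x y by auto
    have pxi: "profit l m n q v c f M i x > 0" using xe key[OF i] by simp
    have pyj: "profit l m n q v c f M j y > 0" using ye key[OF j] by simp
    have xv: "x \<le> v" using pxi r0[of x] unfolding profit_def r_def by fastforce
    have yv: "y \<le> v" using pyj r0[of y] unfolding profit_def r_def by fastforce
    have rx: "r x > 0" using rpos xv by blast
    have ry: "r y > 0" using rpos yv by blast
    have A: "f i x - c > 0" using pxi rx unfolding profit_def r_def[symmetric]
      by (simp add: zero_less_mult_iff)
    have C: "f j y - c > 0" using pyj ry unfolding profit_def r_def[symmetric]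
      by (simp add: zero_less_mult_iff)
    have "f j y < f i y" using assms(9) i j ji by blast
    then have B: "f i y - c > 0" using C by simp
    have "f j y < f j x" using assms(7) j xy by (meson strict_monoD)
    then have D: "f j x - c > 0" using C by simp
    have "g j c < g j (f j y)" using assms(7) j C by (meson strict_monoD diff_gt_0_iff_gt)
    then have ygc: "y > g j c" using assms(8) j by simp
    have ratio: "(f j y - c) / (f i y - c) < (f j x - c) / (f i x - c)"
      using assms(12) i j ji xy ygc by blast
    have i1: "(f i x - c) * r x \<ge> (f i y - c) * r y"
      using key[OF i] xe unfolding profit_def r_def by simp
    have i2: "(f j y - c) * r y \<ge> (f j x - c) * r x"
      using key[OF j] ye unfolding profit_def r_def by simp
    show False using arith_contra[OF A B C D rx ry i1 i2 ratio] .
  qed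
qed

end
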